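(* Let $U=\sum_{j=0}^3c_j\sigma_j\otimes\sigma_j$ be a normalized two-qubit unitary with parameters $x,y,z$ and $c_2=c_3$, and write $E(\alpha,\beta):=E(\varphi(\alpha,\beta;\frac{\pi}{2},\frac{\pi}{2}))$. (i) $\max_{\alpha,\beta\in[0,\pi/2]}E(\alpha,\beta)=\max_{\alpha\in[0,\pi/4],\beta\in[0,\pi/2]}E(\alpha,\beta)=\max_{\alpha\in[0,\pi/2],\beta\in[0,\pi/4]}E(\alpha,\beta)$. (ii) Let $B=\{(\alpha,\beta)\in[0,\pi/4]\times[0,\pi/2]:\ \alpha\in\{0,\pi/4\}\text{ or }\beta\in\{0,\pi/4\}\}$. Then $$\max_{(\alpha,\beta)\in B}E(\alpha,\beta)=\begin{cases}\max\{1,E(\tfrac{\pi}{4},\tfrac{\pi}{4})\}, & \cos(2x+2y)\le0,\\ \max\{E(0,\tfrac{\pi}{2}),E(\tfrac{\pi}{4},\tfrac{\pi}{4})\}, & \cos(2x+2y)>0.\end{cases}$$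
   Context: Pauli matrices: $\sigma_0=I$, $\sigma_1=\begin{pmatrix}0&1\\1&0\end{pmatrix}$, $\sigma_2=\begin{pmatrix}0&-i\\i&0\end{pmatrix}$, $\sigma_3=\begin{pmatrix}1&0\\0&-1\end{pmatrix}$. For real $x,y,z$ set $c_0=\cos x\cos y\cos z+i\sin x\sin y\sin z$, $c_1=\cos x\sin y\sin z+i\sin x\cos y\cos z$, $c_2=\sin x\cos y\sin z+i\cos x\sin y\cos z$, $c_3=\sin x\sin y\cos z+i\cos x\cos y\sin z$, and $U=\sum_{j=0}^3c_j\sigma_j\otimes\sigma_j$ acting on qubits $A,B$. $U$ is called normalized if $\pi/4\ge x\ge y\ge z\ge0$ and $0<y<\pi/4$. $E(\varphi(\alpha,\beta;\frac{\pi}{2},\frac{\pi}{2}))$ denotes the entanglement entropy $S(\mathrm{Tr}_{AR_A}|\chi\rangle\langle\chi|)$ (von Neumann entropy, base-2 logarithm) of $|\chi\rangle=U\big((\cos\alpha|00\rangle+\sin\alpha|11\rangle)_{AR_A}\otimes(\cos\beta|00\rangle+\sin\beta|11\rangle)_{BR_B}\big)$, with $R_A,R_B$ qubits and $U$ acting on $A,B$. *)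

theory Defs
  imports Complex_Main "Jordan_Normal_Form.Char_Poly"
begin

(* Pauli matrices sigma_0..sigma_3; entries indexed by row r, column c in {0,1} *)
definition pauli :: "nat \<Rightarrow> nat \<Rightarrow> nat \<Rightarrow> complex" where
  "pauli j r c =
     (if j = 0 then (if r = c then 1 else 0)
      else if j = 1 then (if r \<noteq> c then 1 else 0)
      else if j = 2 then (if r = 0 \<and> c = 1 then - \<i> else if r = 1 \<and> c = 0 then \<i> else 0)
      else (if r = c then (if r = 0 then 1 else -1) else 0))"

definition coef :: "real \<Rightarrow> real \<Rightarrow> real \<Rightarrow> nat \<Rightarrow> complex" where
  "coef x y z j =
     (if j = 0 then Complex (cos x * cos y * cos z) (sin x * sin y * sin z)
      else if j = 1 then Complex (cos x * sin y * sin z) (sin x * cos y * cos z)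
      else if j = 2 then Complex (sin x * cos y * sin z) (cos x * sin y * cos z)
      else Complex (sin x * sin y * cos z) (cos x * cos y * sin z))"

(* matrix entry <a' b'| U |a b> of U = sum_j c_j sigma_j (x) sigma_j on qubits A,B *)
definition Uent :: "real \<Rightarrow> real \<Rightarrow> real \<Rightarrow> nat \<Rightarrow> nat \<Rightarrow> nat \<Rightarrow> nat \<Rightarrow> complex" where
  "Uent x y z a' b' a b = (\<Sum>j<4. coef x y z j * pauli j a' a * pauli j b' b)"

definition normalized :: "real \<Rightarrow> real \<Rightarrow> real \<Rightarrow> bool" where
  "normalized x y z \<longleftrightarrow> pi/4 \<ge> x \<and> x \<ge> y \<and> y \<ge> z \<and> z \<ge> 0 \<and> 0 < y \<and> y < pi/4"

(* amplitude <a ra| (cos t|00> + sin t|11>) *)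
definition pairamp :: "real \<Rightarrow> nat \<Rightarrow> nat \<Rightarrow> complex" where
  "pairamp t a r = (if a = r then (if a = 0 then complex_of_real (cos t) else complex_of_real (sin t)) else 0)"

(* amplitude <a ra b rb | chi>, chi = U_AB (psi_alpha_{A R_A} (x) psi_beta_{B R_B}) *)
definition chi :: "real \<Rightarrow> real \<Rightarrow> real \<Rightarrow> real \<Rightarrow> real \<Rightarrow> nat \<Rightarrow> nat \<Rightarrow> nat \<Rightarrow> nat \<Rightarrow> complex" where
  "chi x y z \<alpha> \<beta> a' ra b' rb =
     (\<Sum>a<2. \<Sum>b<2. Uent x y z a' b' a b * pairamp \<alpha> a ra * pairamp \<beta> b rb)"

(* reduced state Tr_{A R_A} |chi><chi| on B R_B, basis index 2*b + rb *)
definition rhoBR :: "real \<Rightarrow> real \<Rightarrow> real \<Rightarrow> real \<Rightarrow> real \<Rightarrow> complex mat" where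
  "rhoBR x y z \<alpha> \<beta> = mat 4 4 (\<lambda>(i, k).
     \<Sum>a<2. \<Sum>ra<2. chi x y z \<alpha> \<beta> a ra (i div 2) (i mod 2) * cnj (chi x y z \<alpha> \<beta> a ra (k div 2) (k mod 2)))"

definition eta :: "real \<Rightarrow> real" where
  "eta t = (if t \<le> 0 then 0 else - t * log 2 t)"

(* von Neumann entropy: sum over the eigenvalues (with algebraic multiplicity) of -lambda log2 lambda *)
definition vn_entropy :: "complex mat \<Rightarrow> real" where
  "vn_entropy \<rho> = (\<Sum>l\<in>{l. poly (char_poly \<rho>) l = 0}.
       of_nat (order l (char_poly \<rho>)) * eta (Re l))"

(* E(phi(alpha,beta; pi/2, pi/2)) *)
definition Ent :: "real \<Rightarrow> real \<Rightarrow> real \<Rightarrow> real \<Rightarrow> real \<Rightarrow> real" where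
  "Ent x y z \<alpha> \<beta> = vn_entropy (rhoBR x y z \<alpha> \<beta>)"

end

theory Submission
  imports Defs
begin

lemma sum4: "(\<Sum>j<4::nat. f j) = f 0 + f 1 + f 2 + (f 3::'a::comm_monoid_add)"
  by (simp add: eval_nat_numeral add.assoc)
lemma sum3: "(\<Sum>j<3::nat. f j) = f 0 + f 1 + (f 2::'a::comm_monoid_add)"
  by (simp add: eval_nat_numeral add.assoc)
lemma sum2: "(\<Sum>j<2::nat. f j) = f 0 + (f 1::'a::comm_monoid_add)"
  by (simp add: eval_nat_numeral)

lemma det1: assumes "(A :: 'a :: comm_ring_1 mat) \<in> carrier_mat 1 1"
  shows "det A = A $$ (0,0)"
proof -
  have "mat_delete A 0 0 \<in> carrier_mat 0 0" using mat_delete_carrier[OF assms] by simp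
  then show ?thesis using laplace_expansion_column[OF assms, of 0] assms
  by (simp add: cofactor_def)
qed

lemma det2: assumes "(A :: 'a :: comm_ring_1 mat) \<in> carrier_mat 2 2"
  shows "det A = A $$ (0,0) * A $$ (1,1) - A $$ (1,0) * A $$ (0,1)"
proof -
  have "det A = (\<Sum>i<2. A $$ (i,0) * cofactor A i 0)"
    using laplace_expansion_column[OF assms, of 0] by simp
  also have "\<dots> = A $$ (0,0) * A $$ (1,1) - A $$ (1,0) * A $$ (0,1)"
    using assms
    by (simp add: sum2 cofactor_def det1 mat_delete_carrier mat_delete_def)
  finally show ?thesis .
qed

definition d3 :: "'a::comm_ring_1 \<Rightarrow> 'a \<Rightarrow> 'a \<Rightarrow> 'a \<Rightarrow> 'a \<Rightarrow> 'a \<Rightarrow> 'a \<Rightarrow> 'a \<Rightarrow> 'a \<Rightarrow> 'a" where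
  "d3 a b c d e f g h i = a*(e*i - h*f) - d*(b*i - h*c) + g*(b*f - e*c)"

lemma det3: assumes "(A :: 'a :: comm_ring_1 mat) \<in> carrier_mat 3 3"
  shows "det A = d3 (A $$ (0,0)) (A $$ (0,1)) (A $$ (0,2)) (A $$ (1,0)) (A $$ (1,1)) (A $$ (1,2))
     (A $$ (2,0)) (A $$ (2,1)) (A $$ (2,2))" (is "_ = ?thesis_rhs")
proof -
  have "det A = (\<Sum>i<3. A $$ (i,0) * cofactor A i 0)"
    using laplace_expansion_column[OF assms, of 0] by simp
  also have "\<dots> = ?thesis_rhs"
    using assms
    by (simp add: sum3 cofactor_def det2 mat_delete_carrier mat_delete_def d3_def numeral_2_eq_2 algebra_simps)
  finally show ?thesis .
qed

lemma det4: assumes "(A :: 'a :: comm_ring_1 mat) \<in> carrier_mat 4 4"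
  shows "det A = 
     A $$ (0,0) * d3 (A $$ (1,1)) (A $$ (1,2)) (A $$ (1,3)) (A $$ (2,1)) (A $$ (2,2)) (A $$ (2,3)) (A $$ (3,1)) (A $$ (3,2)) (A $$ (3,3))
   - A $$ (1,0) * d3 (A $$ (0,1)) (A $$ (0,2)) (A $$ (0,3)) (A $$ (2,1)) (A $$ (2,2)) (A $$ (2,3)) (A $$ (3,1)) (A $$ (3,2)) (A $$ (3,3))
   + A $$ (2,0) * d3 (A $$ (0,1)) (A $$ (0,2)) (A $$ (0,3)) (A $$ (1,1)) (A $$ (1,2)) (A $$ (1,3)) (A $$ (3,1)) (A $$ (3,2)) (A $$ (3,3))
   - A $$ (3,0) * d3 (A $$ (0,1)) (A $$ (0,2)) (A $$ (0,3)) (A $$ (1,1)) (A $$ (1,2)) (A $$ (1,3)) (A $$ (2,1)) (A $$ (2,2)) (A $$ (2,3))" (is "_ = ?thesis_rhs")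
proof -
  have "det A = (\<Sum>i<4. A $$ (i,0) * cofactor A i 0)"
    using laplace_expansion_column[OF assms, of 0] by simp
  also have "\<dots> = ?thesis_rhs"
    using assms
    by (simp add: sum4 cofactor_def det3 mat_delete_carrier mat_delete_def numeral_2_eq_2 numeral_3_eq_3)
  finally show ?thesis .
qed



lemma eta_pos: "t > 0 \<Longrightarrow> eta t = - t * ln t / ln 2"
  by (simp add: eta_def log_def)

lemma eta_zero[simp]: "eta 0 = 0" by (simp add: eta_def)

lemma eta_subadd:
  assumes "a \<ge> 0" "b \<ge> 0"
  shows "eta (a + b) \<le> eta a + eta b"
proof (cases "a = 0 \<or> b = 0")
  case True
  then show ?thesis using assms by auto
next
  case False
  then have a: "a > 0" and b: "b > 0" using assms by auto
  have la: "ln a \<le> ln (a + b)" using a b by simp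
  have lb: "ln b \<le> ln (a + b)" using a b by simp
  have "a * ln a \<le> a * ln (a + b)" using la a by (simp add: mult_left_mono)
  moreover have "b * ln b \<le> b * ln (a + b)" using lb b by (simp add: mult_left_mono)
  ultimately have "- (a + b) * ln (a + b) \<le> - a * ln a - b * ln b"
    by (simp add: algebra_simps)
  then have "- (a + b) * ln (a + b) / ln 2 \<le> (- a * ln a - b * ln b) / ln 2"
    by (simp add: divide_right_mono)
  then show ?thesis using a b by (simp add: eta_pos add_divide_distrib diff_divide_distrib)
qed

lemma core_mono:
  fixes m v v' :: real
  assumes "0 \<le> v" "v \<le> v'" "v' \<le> m"
  shows "eta (m + v') + eta (m - v') \<le> eta (m + v) + eta (m - v)"
proof (cases "v' = m")
  case True
  then have "eta (m + v') + eta (m - v') = eta ((m + v) + (m - v))" by simp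
  also have "\<dots> \<le> eta (m + v) + eta (m - v)"
    by (rule eta_subadd) (use assms in auto)
  finally show ?thesis .
next
  case False
  then have vm: "v' < m" using assms by simp
  define g where "g = (\<lambda>w. - (m + w) * ln (m + w) - (m - w) * ln (m - w))"
  have "g v' \<le> g v"
  proof (rule DERIV_nonpos_imp_nonincreasing[of v v' g])
    show "v \<le> v'" by fact
    fix w assume w: "v \<le> w" "w \<le> v'"
    then have p1: "m + w > 0" and p2: "m - w > 0" using assms vm by auto
    have "(g has_real_derivative (ln (m - w) - ln (m + w))) (at w)"
    proof -
      have h1: "(- m - w) / (m + w) = -1" using p1 by (simp add: divide_eq_minus_1_iff)
      show ?thesis
      unfolding g_def
      using p1 p2
      by (auto intro!: derivative_eq_intros simp: h1)
    qed
    moreover have "ln (m - w) - ln (m + w) \<le> 0"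
      using p1 p2 w assms by simp
    ultimately show "\<exists>y. (g has_real_derivative y) (at w) \<and> y \<le> 0" by blast
  qed
  then have "g v' / ln 2 \<le> g v / ln 2" by (simp add: divide_right_mono)
  moreover have "m + v' > 0" "m - v' > 0" "m + v > 0" "m - v > 0" using assms vm by auto
  moreover have "eta (m + t) + eta (m - t) = g t / ln 2" if "m + t > 0" "m - t > 0" for t
    using that by (simp add: g_def eta_pos field_simps)
  ultimately show ?thesis by simp
qed

definition Gm :: "real \<Rightarrow> real \<Rightarrow> real" where
  "Gm m D = eta (m + sqrt (m^2 - D)) + eta (m - sqrt (m^2 - D))"

definition EF :: "real \<Rightarrow> real \<Rightarrow> real \<Rightarrow> real \<Rightarrow> real \<Rightarrow> real \<Rightarrow> real \<Rightarrow> real \<Rightarrow> real" where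
  "EF P R Q S K1 K2 al be =
     (let ca = (cos al)^2; sa = (sin al)^2; cb = (cos be)^2; sb = (sin be)^2 in
      Gm ((P * (ca*cb + sa*sb) + R * (sa*cb + ca*sb))/2) (ca*sa*cb*sb*K1)
    + Gm ((Q * (sa*sb + ca*cb) + S * (ca*sb + sa*cb))/2) (ca*sa*cb*sb*K2))"

lemma Gm_zero: "m \<ge> 0 \<Longrightarrow> Gm m 0 = eta (2 * m)"
  by (simp add: Gm_def)

lemma Gm_mono:
  assumes "0 \<le> m" "0 \<le> D" "D \<le> D'" "D' \<le> m^2"
  shows "Gm m D \<le> Gm m D'"
proof -
  have a: "0 \<le> sqrt (m^2 - D')" using assms by simp
  have b: "sqrt (m^2 - D') \<le> sqrt (m^2 - D)" using assms by simp
  have c: "sqrt (m^2 - D) \<le> m"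
    using assms real_sqrt_le_mono[of "m^2 - D" "m^2"] by simp
  show ?thesis unfolding Gm_def by (rule core_mono[OF a b c])
qed

lemma EF_sym: "EF P R Q S K1 K2 al be = EF P R Q S K1 K2 be al"
  unfolding EF_def Let_def by (simp add: ac_simps)

lemma EF_ref: "EF P R Q S K1 K2 al be = EF P R Q S K1 K2 (pi/2 - al) (pi/2 - be)"
  unfolding EF_def Let_def by (simp add: cos_diff sin_diff ac_simps)

lemma EF0:
  assumes "0 \<le> P" "0 \<le> R" "P \<le> 1" "R \<le> 1"
  shows "EF P R (1-P) (1-R) K1 K2 0 be = eta (P * (cos be)^2 + R * (sin be)^2) + eta (1 - (P * (cos be)^2 + R * (sin be)^2))"
proof -
  have s: "(sin be)^2 = 1 - (cos be)^2" by (simp add: sin_squared_eq)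
  have c: "0 \<le> (cos be)^2" "(cos be)^2 \<le> 1" by (simp_all add: abs_square_le_1)
  have m1: "(P * (cos be)^2 + R * (sin be)^2) / 2 \<ge> 0" using assms by simp
  have m2: "((1-P) * (cos be)^2 + (1-R) * (sin be)^2) / 2 = (1 - (P * (cos be)^2 + R * (sin be)^2)) / 2"
    unfolding s by (simp add: algebra_simps)
  have "P * (cos be)^2 \<le> (cos be)^2" "R * (sin be)^2 \<le> (sin be)^2"
    using assms by (simp_all add: mult_left_le_one_le)
  then have m2': "1 - (P * (cos be)^2 + R * (sin be)^2) \<ge> 0" using s by simp
  show ?thesis
    unfolding EF_def Let_def using m1 m2'
    apply (simp add: Gm_def m2)
    done
qed

lemma cs_le: "(cos (b::real))^2 * (sin b)^2 \<le> 1/4"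
proof -
  have s: "(sin b)^2 = 1 - (cos b)^2" by (simp add: sin_squared_eq)
  have "0 \<le> ((cos b)^2 - 1/2)^2" by simp
  then show ?thesis unfolding s by (simp add: power2_eq_square algebra_simps)
qed

lemma EFq_eq: "EF P R Q S K1 K2 (pi/4) be = Gm ((P+R)/4) ((cos be)^2*(sin be)^2*K1/4) + Gm ((Q+S)/4) ((cos be)^2*(sin be)^2*K2/4)"
proof -
  have c: "(cos (pi/4))^2 = (1/2::real)" "(sin (pi/4))^2 = (1/2::real)"
    by (simp_all add: cos_45 sin_45 power_divide)
  have s: "(sin be)^2 = 1 - (cos be)^2" by (simp add: sin_squared_eq)
  have h: "(cos be)^2 / 2 + (sin be)^2 / 2 = 1/2" "(sin be)^2 / 2 + (cos be)^2 / 2 = 1/2"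
    unfolding s by (simp_all add: field_simps)
  have h2: "(P / 2 + R / 2) / 2 = (P + R) / 4" "(Q / 2 + S / 2) / 2 = (Q + S) / 4" for P R Q S :: real
    by simp_all
  show ?thesis unfolding EF_def Let_def c by (simp add: h h2 ac_simps)
qed

lemma EFq_mono:
  assumes "0 \<le> P + R" "0 \<le> Q + S" "0 \<le> K1" "0 \<le> K2"
    and "K1/16 \<le> ((P+R)/4)^2" "K2/16 \<le> ((Q+S)/4)^2"
  shows "EF P R Q S K1 K2 (pi/4) be \<le> EF P R Q S K1 K2 (pi/4) (pi/4)"
proof -
  have c: "(cos (pi/4))^2 = (1/2::real)" "(sin (pi/4))^2 = (1/2::real)"
    by (simp_all add: cos_45 sin_45 power_divide)
  have cs: "(cos be)^2*(sin be)^2 \<le> 1/4" by (rule cs_le)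
  have "(cos be)^2*(sin be)^2*K1/4 \<le> (1/4)*K1/4"
    by (rule divide_right_mono[OF mult_right_mono[OF cs assms(3)]]) simp
  moreover have "(cos be)^2*(sin be)^2*K2/4 \<le> (1/4)*K2/4"
    by (rule divide_right_mono[OF mult_right_mono[OF cs assms(4)]]) simp
  ultimately show ?thesis unfolding EFq_eq c using assms
    by (intro add_mono Gm_mono) auto
qed

lemma eta_half: "eta (1/2) = 1/2"
  by (simp add: eta_def log_divide)

lemma h_le1:
  assumes "0 \<le> T" "T \<le> 1"
  shows "eta T + eta (1 - T) \<le> 1"
proof -
  have "eta (1/2 + \<bar>T - 1/2\<bar>) + eta (1/2 - \<bar>T - 1/2\<bar>) \<le> eta (1/2 + 0) + eta (1/2 - 0)"
    by (rule core_mono) (use assms in \<open>auto simp: abs_if\<close>)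
  moreover have "eta (1/2 + \<bar>T - 1/2\<bar>) + eta (1/2 - \<bar>T - 1/2\<bar>) = eta T + eta (1 - T)"
    by (cases "T \<ge> 1/2") (auto simp: abs_if)
  ultimately show ?thesis by (simp add: eta_half)
qed

lemma h_mono:
  assumes "1/2 \<le> R" "R \<le> T" "T \<le> 1"
  shows "eta T + eta (1 - T) \<le> eta R + eta (1 - R)"
proof -
  have "eta (1/2 + (T - 1/2)) + eta (1/2 - (T - 1/2)) \<le> eta (1/2 + (R - 1/2)) + eta (1/2 - (R - 1/2))"
    by (rule core_mono) (use assms in auto)
  then show ?thesis by simp
qed

lemma T_bounds:
  assumes "0 \<le> R" "R \<le> P" "P \<le> 1"
  shows "R \<le> P * (cos (b::real))^2 + R * (sin b)^2" "P * (cos b)^2 + R * (sin b)^2 \<le> 1"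
    "0 \<le> P * (cos b)^2 + R * (sin b)^2"
proof -
  have s: "(sin b)^2 = 1 - (cos b)^2" by (simp add: sin_squared_eq)
  have c: "0 \<le> (cos b)^2" "(cos b)^2 \<le> 1" by (simp_all add: abs_square_le_1)
  have "R * (cos b)^2 \<le> P * (cos b)^2" using assms c by (simp add: mult_right_mono)
  then show "R \<le> P * (cos b)^2 + R * (sin b)^2" unfolding s by (simp add: algebra_simps)
  have "P * (cos b)^2 \<le> (cos b)^2" using assms c by (simp add: mult_left_le_one_le)
  moreover have "R * (1 - (cos b)^2) \<le> 1 - (cos b)^2" using assms c by (simp add: mult_left_le_one_le)
  ultimately show "P * (cos b)^2 + R * (sin b)^2 \<le> 1" unfolding s by simp
  show "0 \<le> P * (cos b)^2 + R * (sin b)^2" using assms by simp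
qed

lemma T_half:
  assumes "R \<le> 1/2" "1/2 \<le> P"
  shows "\<exists>b. 0 \<le> b \<and> b \<le> pi/2 \<and> P * (cos b)^2 + R * (sin b)^2 = 1/2"
proof -
  have "\<exists>b. 0 \<le> b \<and> b \<le> pi/2 \<and> (\<lambda>b. P * (cos b)^2 + R * (sin b)^2) b = 1/2"
    by (rule IVT2) (use assms in \<open>auto intro!: continuous_intros\<close>)
  then show ?thesis by simp
qed


lemma order_lin: "order a [:-b,1:] = (if a = b then 1 else (0::nat))"
proof (cases "a = b")
  case True
  then show ?thesis using order_power_n_n[of b 1] by simp
next
  case False
  then have "order a [:-b,1:] = 0" by (intro order_0I) simp
  then show ?thesis using False by simp
qed

lemma prod_lin_nz: "(\<Prod>i<(n::nat). [:-(L i),1:]) \<noteq> (0::'a::idom poly)"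
  by (subst prod_zero_iff) auto

lemma order_prod_lin:
  "order l (\<Prod>i<(n::nat). [:-(L i),1:]) = card {i. i < n \<and> L i = (l::'a::idom)}"
proof (induction n)
  case 0
  then show ?case by (simp add: order_0I)
next
  case (Suc n)
  have e: "{i. i < Suc n \<and> L i = l} = {i. i < n \<and> L i = l} \<union> (if L n = l then {n} else {})"
    by (auto simp: less_Suc_eq)
  have "order l (\<Prod>i<Suc n. [:-(L i),1:]) = order l ((\<Prod>i<n. [:-(L i),1:]) * [:-(L n),1:])"
    by simp
  also have "\<dots> = order l (\<Prod>i<n. [:-(L i),1:]) + order l [:-(L n),1:]"
    by (rule order_mult) (use prod_lin_nz[of L n] in \<open>simp only: mult_eq_0_iff; simp\<close>)
  also have "\<dots> = card {i. i < Suc n \<and> L i = l}"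
    unfolding Suc e by (auto simp: order_lin card_Un_disjoint)
  finally show ?case .
qed

lemma roots_prod_lin:
  "{l. poly (\<Prod>i<n. [:-(L i),1:]) l = 0} = L ` {..<(n::nat)}" for L :: "nat \<Rightarrow> 'a::idom"
  by (auto simp: poly_prod prod_zero_iff)

lemma vn_sum_lin:
  fixes L :: "nat \<Rightarrow> complex"
  shows "(\<Sum>l\<in>{l. poly (\<Prod>i<n. [:-(L i),1:]) l = 0}. of_nat (order l (\<Prod>i<n. [:-(L i),1:])) * f l)
     = (\<Sum>i<n. f (L i))"
proof -
  have "(\<Sum>i<n. f (L i)) = (\<Sum>l\<in>L ` {..<n}. \<Sum>i\<in>{i\<in>{..<n}. L i = l}. f (L i))"
    by (rule sum.image_gen) simp
  also have "\<dots> = (\<Sum>l\<in>L ` {..<n}. of_nat (card {i. i < n \<and> L i = l}) * f l)"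
    by (intro sum.cong refl) auto
  finally show ?thesis by (simp add: roots_prod_lin order_prod_lin)
qed

lemma quad_eq:
  fixes a d :: real and b :: complex
  defines "m \<equiv> (a + d) / 2" and "v \<equiv> sqrt (((a - d)/2)^2 + (cmod b)^2)"
  shows "[:- complex_of_real a, 1:] * [:- complex_of_real d, 1:] - [:b * cnj b:]
       = [:- complex_of_real (m + v), 1:] * [:- complex_of_real (m - v), 1:]"
proof -
  have v2: "v^2 = ((a - d)/2)^2 + (cmod b)^2" unfolding v_def by simp
  have bb: "b * cnj b = complex_of_real ((cmod b)^2)"
    using complex_norm_square[of b] by simp
  have "(m + v) * (m - v) = m^2 - v^2" by (simp add: power2_eq_square algebra_simps)
  also have "\<dots> = a * d - (cmod b)^2"
    unfolding v2 m_def by (simp add: power2_eq_square field_simps)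
  finally have "(m + v) * (m - v) = a * d - (cmod b)^2" .
  then have e1: "complex_of_real (m + v) * complex_of_real (m - v) = complex_of_real a * complex_of_real d - b * cnj b"
    unfolding bb by (metis of_real_diff of_real_mult)
  have e2: "complex_of_real (m + v) + complex_of_real (m - v) = complex_of_real a + complex_of_real d"
  proof -
    have "(m + v) + (m - v) = a + d" unfolding m_def by simp
    then show ?thesis by (metis of_real_add)
  qed
  show ?thesis
    using e1 e2 by (simp add: algebra_simps)
qed

lemma cp4: assumes A: "(A :: 'a :: comm_ring_1 mat) \<in> carrier_mat 4 4"
  and z: "A $$ (0,1) = 0" "A $$ (0,2) = 0" "A $$ (1,0) = 0" "A $$ (1,3) = 0"
         "A $$ (2,0) = 0" "A $$ (2,3) = 0" "A $$ (3,1) = 0" "A $$ (3,2) = 0"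
  shows "char_poly A = (([:- A $$ (0,0), 1:]) * [:- A $$ (3,3), 1:] - [:A $$ (0,3) * A $$ (3,0):])
                     * (([:- A $$ (1,1), 1:]) * [:- A $$ (2,2), 1:] - [:A $$ (1,2) * A $$ (2,1):])"
proof -
  have C: "char_poly_matrix A \<in> carrier_mat 4 4" using A by simp
  show ?thesis
    unfolding char_poly_def
    apply (subst det4[OF C])
    using A z
    apply (simp add: char_poly_matrix_def d3_def)
    apply (auto simp: algebra_simps)
    done
qed

lemma prod4: "(\<Prod>j<4::nat. f j) = f 0 * f 1 * f 2 * (f 3::'a::comm_monoid_mult)"
  by (simp add: eval_nat_numeral mult.assoc)

lemma vn4:
  fixes A :: "complex mat" and a1 d1 a2 d2 :: real
  assumes A: "A \<in> carrier_mat 4 4"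
  and z: "A $$ (0,1) = 0" "A $$ (0,2) = 0" "A $$ (1,0) = 0" "A $$ (1,3) = 0"
         "A $$ (2,0) = 0" "A $$ (2,3) = 0" "A $$ (3,1) = 0" "A $$ (3,2) = 0"
  and d: "A $$ (0,0) = complex_of_real a1" "A $$ (3,3) = complex_of_real d1"
         "A $$ (1,1) = complex_of_real a2" "A $$ (2,2) = complex_of_real d2"
  and h: "A $$ (3,0) = cnj (A $$ (0,3))" "A $$ (2,1) = cnj (A $$ (1,2))"
  shows "vn_entropy A =
     eta ((a1 + d1)/2 + sqrt (((a1 - d1)/2)^2 + (cmod (A $$ (0,3)))^2))
   + eta ((a1 + d1)/2 - sqrt (((a1 - d1)/2)^2 + (cmod (A $$ (0,3)))^2))
   + eta ((a2 + d2)/2 + sqrt (((a2 - d2)/2)^2 + (cmod (A $$ (1,2)))^2))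
   + eta ((a2 + d2)/2 - sqrt (((a2 - d2)/2)^2 + (cmod (A $$ (1,2)))^2))"
proof -
  define l1 where "l1 = complex_of_real ((a1 + d1)/2 + sqrt (((a1 - d1)/2)^2 + (cmod (A $$ (0,3)))^2))"
  define l2 where "l2 = complex_of_real ((a1 + d1)/2 - sqrt (((a1 - d1)/2)^2 + (cmod (A $$ (0,3)))^2))"
  define l3 where "l3 = complex_of_real ((a2 + d2)/2 + sqrt (((a2 - d2)/2)^2 + (cmod (A $$ (1,2)))^2))"
  define l4 where "l4 = complex_of_real ((a2 + d2)/2 - sqrt (((a2 - d2)/2)^2 + (cmod (A $$ (1,2)))^2))"
  define L where "L = (\<lambda>i::nat. [l1,l2,l3,l4] ! i)"
  have L: "L 0 = l1" "L 1 = l2" "L (Suc 0) = l2" "L 2 = l3" "L 3 = l4" by (simp_all add: L_def numeral_3_eq_3)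
  have "char_poly A = (\<Prod>i<4. [:-(L i),1:])"
    unfolding cp4[OF A z] d h quad_eq prod4 L l1_def[symmetric] l2_def[symmetric] l3_def[symmetric] l4_def[symmetric]
    by (simp only: mult.assoc)
  then show ?thesis
    unfolding vn_entropy_def by (simp add: vn_sum_lin sum4 L l1_def l2_def l3_def l4_def)
qed

definition "pc x y z = coef x y z 0 + coef x y z 3"
definition "rc x y z = coef x y z 0 - coef x y z 3"
definition "qc x y z = coef x y z 1 - coef x y z 2"
definition "sc x y z = coef x y z 1 + coef x y z 2"

lemma nsq: "(complex_of_real (cmod z))^2 = z * cnj z"
  using complex_norm_square[of z] by simp

lemmas rsimps = rhoBR_def chi_def Uent_def sum4 sum2 pauli_def pairamp_def pc_def rc_def qc_def sc_def nsq

lemma rho00: "rhoBR x y z al be $$ (0,0) = complex_of_real ((cos be)^2 * ((cmod (pc x y z))^2 * (cos al)^2 + (cmod (rc x y z))^2 * (sin al)^2))"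
  apply (simp add: rsimps)
  apply (simp add: power2_eq_square algebra_simps)
  done
lemma rho03: "rhoBR x y z al be $$ (0,3) = complex_of_real (cos be * sin be) *
   (pc x y z * cnj (rc x y z) * complex_of_real ((cos al)^2) + rc x y z * cnj (pc x y z) * complex_of_real ((sin al)^2))"
  apply (simp add: rsimps)
  apply (simp add: power2_eq_square algebra_simps)
  done
lemma rho33: "rhoBR x y z al be $$ (3,3) = complex_of_real ((sin be)^2 * ((cmod (rc x y z))^2 * (cos al)^2 + (cmod (pc x y z))^2 * (sin al)^2))"
  apply (simp add: rsimps)
  apply (simp add: power2_eq_square algebra_simps)
  done
lemma rho11: "rhoBR x y z al be $$ (1,1) = complex_of_real ((sin be)^2 * ((cmod (qc x y z))^2 * (sin al)^2 + (cmod (sc x y z))^2 * (cos al)^2))"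
  apply (simp add: rsimps)
  apply (simp add: power2_eq_square algebra_simps)
  done
lemma rho22: "rhoBR x y z al be $$ (2,2) = complex_of_real ((cos be)^2 * ((cmod (sc x y z))^2 * (sin al)^2 + (cmod (qc x y z))^2 * (cos al)^2))"
  apply (simp add: rsimps)
  apply (simp add: power2_eq_square algebra_simps)
  done
lemma rho12: "rhoBR x y z al be $$ (1,2) = complex_of_real (cos be * sin be) *
   (qc x y z * cnj (sc x y z) * complex_of_real ((sin al)^2) + sc x y z * cnj (qc x y z) * complex_of_real ((cos al)^2))"
  apply (simp add: rsimps)
  apply (simp add: power2_eq_square algebra_simps)
  done
lemma rho30: "rhoBR x y z al be $$ (3,0) = cnj (rhoBR x y z al be $$ (0,3))"
  by (simp add: rsimps)
lemma rho21: "rhoBR x y z al be $$ (2,1) = cnj (rhoBR x y z al be $$ (1,2))"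
  by (simp add: rsimps)
lemma rhoz: "rhoBR x y z al be $$ (0,1) = 0" "rhoBR x y z al be $$ (0,2) = 0"
  "rhoBR x y z al be $$ (1,0) = 0" "rhoBR x y z al be $$ (1,3) = 0"
  "rhoBR x y z al be $$ (2,0) = 0" "rhoBR x y z al be $$ (2,3) = 0"
  "rhoBR x y z al be $$ (3,1) = 0" "rhoBR x y z al be $$ (3,2) = 0"
  by (simp_all add: rsimps)
lemma rho_car: "rhoBR x y z al be \<in> carrier_mat 4 4"
  by (simp add: rhoBR_def)

definition "PP x y z = (cmod (pc x y z))^2"
definition "RR x y z = (cmod (rc x y z))^2"
definition "QQ x y z = (cmod (qc x y z))^2"
definition "SS x y z = (cmod (sc x y z))^2"
definition "KK1 x y z = PP x y z ^2 + RR x y z ^2 - 2 * ((Re (pc x y z * cnj (rc x y z)))^2 - (Im (pc x y z * cnj (rc x y z)))^2)"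
definition "KK2 x y z = QQ x y z ^2 + SS x y z ^2 - 2 * ((Re (qc x y z * cnj (sc x y z)))^2 - (Im (qc x y z * cnj (sc x y z)))^2)"

lemma cm: "(cmod (complex_of_real c * (w * complex_of_real A + cnj w * complex_of_real B)))^2
   = c^2 * ((Re w)^2*(A+B)^2 + (Im w)^2*(A-B)^2)"
  by (simp only: cmod_power2) (simp add: power2_eq_square algebra_simps)

lemma cm2: "(cmod (p * cnj r))^2 = (cmod p)^2 * (cmod r)^2"
  by (simp add: norm_mult power_mult_distrib)

lemma cm3: "(cmod w)^2 = (Re w)^2 + (Im w)^2"
  by (simp add: cmod_power2)

lemma blk:
  fixes a d c A B P R u v :: real
  assumes "a = c1 * (P * A + R * B)" "d = c2 * (R * A + P * B)" "c1 * c2 = c^2"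
    and "P * R = u^2 + v^2" "nb = c^2 * (u^2*(A+B)^2 + v^2*(A-B)^2)"
  shows "((a - d)/2)^2 + nb = ((a+d)/2)^2 - A*B*c^2*(P^2 + R^2 - 2*(u^2 - v^2))"
proof -
  have e1: "((a - d)/2)^2 + nb = ((a+d)/2)^2 - (a*d - nb)" by (simp add: power2_eq_square field_simps)
  have "a*d = (c1*c2)*((P*A+R*B)*(R*A+P*B))" using assms(1,2) by (simp add: algebra_simps)
  also have "\<dots> = c^2 * ((P*R)*(A^2+B^2) + A*B*(P^2+R^2))"
    unfolding assms(3) by (simp add: power2_eq_square algebra_simps)
  also have "\<dots> = c^2 * ((u^2+v^2)*(A^2+B^2) + A*B*(P^2+R^2))" unfolding assms(4) ..
  finally have "a*d - nb = A*B*c^2*(P^2 + R^2 - 2*(u^2 - v^2))"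
    unfolding assms(5) by (simp add: power2_eq_square algebra_simps)
  then show ?thesis using e1 by simp
qed

lemma Ent_EF: "Ent x y z al be = EF (PP x y z) (RR x y z) (QQ x y z) (SS x y z) (KK1 x y z) (KK2 x y z) al be"
proof -
  let ?ca = "(cos al)^2" and ?sa = "(sin al)^2" and ?cb = "(cos be)^2" and ?sb = "(sin be)^2"
  have V: "vn_entropy (rhoBR x y z al be) = 
     eta ((a1 + d1)/2 + sqrt (((a1 - d1)/2)^2 + (cmod (rhoBR x y z al be $$ (0,3)))^2))
   + eta ((a1 + d1)/2 - sqrt (((a1 - d1)/2)^2 + (cmod (rhoBR x y z al be $$ (0,3)))^2))
   + eta ((a2 + d2)/2 + sqrt (((a2 - d2)/2)^2 + (cmod (rhoBR x y z al be $$ (1,2)))^2))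
   + eta ((a2 + d2)/2 - sqrt (((a2 - d2)/2)^2 + (cmod (rhoBR x y z al be $$ (1,2)))^2))"
    if "a1 = ?cb * (PP x y z * ?ca + RR x y z * ?sa)" "d1 = ?sb * (RR x y z * ?ca + PP x y z * ?sa)"
       "a2 = ?sb * (QQ x y z * ?sa + SS x y z * ?ca)" "d2 = ?cb * (SS x y z * ?sa + QQ x y z * ?ca)"
    for a1 d1 a2 d2
    by (rule vn4[OF rho_car rhoz]) (simp only: that rho00 rho33 rho11 rho22 rho30 rho21 PP_def RR_def QQ_def SS_def)+
  have b1: "(cmod (rhoBR x y z al be $$ (0,3)))^2 = (cos be * sin be)^2 *
      ((Re (pc x y z * cnj (rc x y z)))^2*(?ca+?sa)^2 + (Im (pc x y z * cnj (rc x y z)))^2*(?ca-?sa)^2)"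
    unfolding rho03 cm[symmetric] by (simp add: ac_simps)
  have b2: "(cmod (rhoBR x y z al be $$ (1,2)))^2 = (cos be * sin be)^2 *
      ((Re (qc x y z * cnj (sc x y z)))^2*(?sa+?ca)^2 + (Im (qc x y z * cnj (sc x y z)))^2*(?sa-?ca)^2)"
    unfolding rho12 cm[symmetric] by (simp add: ac_simps)
  have pr1: "PP x y z * RR x y z = (Re (pc x y z * cnj (rc x y z)))^2 + (Im (pc x y z * cnj (rc x y z)))^2"
    unfolding PP_def RR_def cm3[symmetric] cm2 ..
  have pr2: "QQ x y z * SS x y z = (Re (qc x y z * cnj (sc x y z)))^2 + (Im (qc x y z * cnj (sc x y z)))^2"
    unfolding QQ_def SS_def cm3[symmetric] cm2 ..
  have s1: "((a1 - d1)/2)^2 + (cmod (rhoBR x y z al be $$ (0,3)))^2 = ((a1+d1)/2)^2 - ?ca*?sa*?cb*?sb*KK1 x y z"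
    if "a1 = ?cb * (PP x y z * ?ca + RR x y z * ?sa)" "d1 = ?sb * (RR x y z * ?ca + PP x y z * ?sa)" for a1 d1
    using blk[OF that _ pr1 b1] unfolding KK1_def by (simp add: power_mult_distrib algebra_simps)
  have s2: "((a2 - d2)/2)^2 + (cmod (rhoBR x y z al be $$ (1,2)))^2 = ((a2+d2)/2)^2 - ?ca*?sa*?cb*?sb*KK2 x y z"
    if "a2 = ?sb * (QQ x y z * ?sa + SS x y z * ?ca)" "d2 = ?cb * (SS x y z * ?sa + QQ x y z * ?ca)" for a2 d2
    using blk[OF that _ pr2 b2] unfolding KK2_def by (simp add: power_mult_distrib algebra_simps)
  show ?thesis
    unfolding Ent_def
    unfolding V[OF refl refl refl refl] s1[OF refl refl] s2[OF refl refl]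
    unfolding EF_def Gm_def Let_def
    apply (simp add: algebra_simps)
    done
qed


lemma sq_split: "(a * c)^2 + (a * s)^2 = (a::real)^2" if "c^2 + s^2 = 1" for c s
  using that by (simp add: power_mult_distrib distrib_left[symmetric])

lemma PP_eq: "PP x y z = (cos (x - y))^2"
proof -
  have "Re (pc x y z) = cos (x - y) * cos z" "Im (pc x y z) = cos (x - y) * sin z"
    by (simp_all add: pc_def coef_def cos_diff algebra_simps)
  then show ?thesis unfolding PP_def cmod_power2 by (simp add: sq_split)
qed

lemma RR_eq: "RR x y z = (cos (x + y))^2"
proof -
  have "Re (rc x y z) = cos (x + y) * cos z" "Im (rc x y z) = cos (x + y) * (- sin z)"
    by (simp_all add: rc_def coef_def cos_add algebra_simps)
  then show ?thesis unfolding RR_def cmod_power2 by (simp add: sq_split)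
qed

lemma QQ_eq: "QQ x y z = 1 - PP x y z"
proof -
  have "Re (qc x y z) = sin (x - y) * (- sin z)" "Im (qc x y z) = sin (x - y) * cos z"
    by (simp_all add: qc_def coef_def sin_diff algebra_simps)
  then have "QQ x y z = (sin (x - y))^2" unfolding QQ_def cmod_power2 by (simp add: sq_split)
  then show ?thesis unfolding PP_eq by (simp add: sin_squared_eq)
qed

lemma SS_eq: "SS x y z = 1 - RR x y z"
proof -
  have "Re (sc x y z) = sin (x + y) * sin z" "Im (sc x y z) = sin (x + y) * cos z"
    by (simp_all add: sc_def coef_def sin_add algebra_simps)
  then have "SS x y z = (sin (x + y))^2" unfolding SS_def cmod_power2 by (simp add: sq_split)
  then show ?thesis unfolding RR_eq by (simp add: sin_squared_eq)
qed

lemma KK_bounds: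
  fixes P R u v K :: real
  assumes "P * R = u^2 + v^2" "K = P^2 + R^2 - 2 * (u^2 - v^2)"
  shows "0 \<le> K" "K \<le> (P + R)^2"
proof -
  have e1: "(P - R)^2 = P^2 + R^2 - 2 * (P * R)" "(P + R)^2 = P^2 + R^2 + 2 * (P * R)"
    by (simp_all add: power2_eq_square algebra_simps)
  have "K = (P - R)^2 + 4 * v^2" unfolding e1 assms by simp
  then show "0 \<le> K" by simp
  have "K = (P + R)^2 - 4 * u^2" unfolding e1 assms by simp
  then show "K \<le> (P + R)^2" by simp
qed

lemma KK1_bounds: "0 \<le> KK1 x y z" "KK1 x y z \<le> (PP x y z + RR x y z)^2"
proof -
  have pr1: "PP x y z * RR x y z = (Re (pc x y z * cnj (rc x y z)))^2 + (Im (pc x y z * cnj (rc x y z)))^2"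
    unfolding PP_def RR_def cm3[symmetric] cm2 ..
  show "0 \<le> KK1 x y z" "KK1 x y z \<le> (PP x y z + RR x y z)^2"
    using KK_bounds[OF pr1 KK1_def] by auto
qed

lemma KK2_bounds: "0 \<le> KK2 x y z" "KK2 x y z \<le> (QQ x y z + SS x y z)^2"
proof -
  have pr2: "QQ x y z * SS x y z = (Re (qc x y z * cnj (sc x y z)))^2 + (Im (qc x y z * cnj (sc x y z)))^2"
    unfolding QQ_def SS_def cm3[symmetric] cm2 ..
  show "0 \<le> KK2 x y z" "KK2 x y z \<le> (QQ x y z + SS x y z)^2"
    using KK_bounds[OF pr2 KK2_def] by auto
qed


lemma Ent_ref: "Ent x y z a b = Ent x y z (pi/2 - a) (pi/2 - b)"
  unfolding Ent_EF by (rule EF_ref)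

lemma Ent_sym: "Ent x y z a b = Ent x y z b a"
  unfolding Ent_EF by (rule EF_sym)

lemma img_half1:
  "(\<lambda>p. Ent x y z (fst p) (snd p)) ` ({0..pi/2} \<times> {0..pi/2})
   = (\<lambda>p. Ent x y z (fst p) (snd p)) ` ({0..pi/4} \<times> {0..pi/2})"
proof (rule subset_antisym)
  show "(\<lambda>p. Ent x y z (fst p) (snd p)) ` ({0..pi/4} \<times> {0..pi/2})
     \<subseteq> (\<lambda>p. Ent x y z (fst p) (snd p)) ` ({0..pi/2} \<times> {0..pi/2})"
    by (rule image_mono) auto
  show "(\<lambda>p. Ent x y z (fst p) (snd p)) ` ({0..pi/2} \<times> {0..pi/2})
     \<subseteq> (\<lambda>p. Ent x y z (fst p) (snd p)) ` ({0..pi/4} \<times> {0..pi/2})"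
  proof
    fix v assume "v \<in> (\<lambda>p. Ent x y z (fst p) (snd p)) ` ({0..pi/2} \<times> {0..pi/2})"
    then obtain a b where ab: "a \<in> {0..pi/2}" "b \<in> {0..pi/2}" and v: "v = Ent x y z a b" by auto
    show "v \<in> (\<lambda>p. Ent x y z (fst p) (snd p)) ` ({0..pi/4} \<times> {0..pi/2})"
    proof (cases "a \<le> pi/4")
      case True
      then show ?thesis using ab v by (intro image_eqI[of _ _ "(a,b)"]) auto
    next
      case False
      then show ?thesis using ab v Ent_ref[of x y z a b]
        by (intro image_eqI[of _ _ "(pi/2 - a, pi/2 - b)"]) auto
    qed
  qed
qed

lemma img_half2:
  "(\<lambda>p. Ent x y z (fst p) (snd p)) ` ({0..pi/2} \<times> {0..pi/2})
   = (\<lambda>p. Ent x y z (fst p) (snd p)) ` ({0..pi/2} \<times> {0..pi/4})"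
proof (rule subset_antisym)
  show "(\<lambda>p. Ent x y z (fst p) (snd p)) ` ({0..pi/2} \<times> {0..pi/4})
     \<subseteq> (\<lambda>p. Ent x y z (fst p) (snd p)) ` ({0..pi/2} \<times> {0..pi/2})"
    by (rule image_mono) auto
  show "(\<lambda>p. Ent x y z (fst p) (snd p)) ` ({0..pi/2} \<times> {0..pi/2})
     \<subseteq> (\<lambda>p. Ent x y z (fst p) (snd p)) ` ({0..pi/2} \<times> {0..pi/4})"
  proof
    fix v assume "v \<in> (\<lambda>p. Ent x y z (fst p) (snd p)) ` ({0..pi/2} \<times> {0..pi/2})"
    then obtain a b where ab: "a \<in> {0..pi/2}" "b \<in> {0..pi/2}" and v: "v = Ent x y z a b" by auto
    show "v \<in> (\<lambda>p. Ent x y z (fst p) (snd p)) ` ({0..pi/2} \<times> {0..pi/4})"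
    proof (cases "b \<le> pi/4")
      case True
      then show ?thesis using ab v by (intro image_eqI[of _ _ "(a,b)"]) auto
    next
      case False
      then show ?thesis using ab v Ent_ref[of x y z a b]
        by (intro image_eqI[of _ _ "(pi/2 - a, pi/2 - b)"]) auto
    qed
  qed
qed

theorem lemma4:
  fixes x y z :: real
  assumes "normalized x y z"
    and "coef x y z 2 = coef x y z 3"
  shows "(SUP p\<in>{0..pi/2} \<times> {0..pi/2}. Ent x y z (fst p) (snd p))
           = (SUP p\<in>{0..pi/4} \<times> {0..pi/2}. Ent x y z (fst p) (snd p))
       \<and> (SUP p\<in>{0..pi/2} \<times> {0..pi/2}. Ent x y z (fst p) (snd p))
           = (SUP p\<in>{0..pi/2} \<times> {0..pi/4}. Ent x y z (fst p) (snd p))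
       \<and> (SUP p\<in>{p \<in> {0..pi/4} \<times> {0..pi/2}. fst p \<in> {0, pi/4} \<or> snd p \<in> {0, pi/4}}.
             Ent x y z (fst p) (snd p))
           = (if cos (2*x + 2*y) \<le> 0
              then max 1 (Ent x y z (pi/4) (pi/4))
              else max (Ent x y z 0 (pi/2)) (Ent x y z (pi/4) (pi/4)))"
proof -
  have n: "0 \<le> y" "y \<le> x" "x \<le> pi/4" using assms(1) unfolding normalized_def by auto
  define P where "P = PP x y z"
  define R where "R = RR x y z"
  define K1 where "K1 = KK1 x y z"
  define K2 where "K2 = KK2 x y z"
  have E: "Ent x y z a b = EF P R (1 - P) (1 - R) K1 K2 a b" for a b
    unfolding Ent_EF P_def R_def K1_def K2_def QQ_eq SS_eq ..
  have P2: "2 * P - 1 = cos (2 * (x - y))" unfolding P_def PP_eq cos_double_cos by simp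
  have R2: "2 * R - 1 = cos (2 * (x + y))" unfolding R_def RR_eq cos_double_cos by simp
  have "0 \<le> cos (2 * (x - y))" by (rule cos_ge_zero) (use n in auto)
  then have Pge: "1/2 \<le> P" using P2 by simp
  have "cos (2 * (x + y)) \<le> cos (2 * (x - y))" by (rule cos_monotone_0_pi_le) (use n in auto)
  then have RP: "R \<le> P" using P2 R2 by simp
  have R0: "0 \<le> R" unfolding R_def RR_eq by simp
  have P1: "P \<le> 1" unfolding P_def PP_eq by (simp add: abs_square_le_1)
  have cR: "cos (2*x + 2*y) \<le> 0 \<longleftrightarrow> R \<le> 1/2" using R2 by (simp add: algebra_simps)
  have K1b: "0 \<le> K1" "K1 \<le> (P + R)^2" unfolding K1_def P_def R_def by (rule KK1_bounds)+
  have K2b: "0 \<le> K2" "K2 \<le> ((1 - P) + (1 - R))^2" using KK2_bounds[of x y z]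
    unfolding K2_def P_def R_def QQ_eq SS_eq by auto
  let ?E = "Ent x y z"
  define T where "T = (\<lambda>b. P * (cos b)^2 + R * (sin b)^2)"
  have E0: "?E 0 b = eta (T b) + eta (1 - T b)" for b
    unfolding E T_def using EF0[of P R K1 K2 b] Pge RP R0 P1 by simp
  have Tb: "R \<le> T b" "T b \<le> 1" "0 \<le> T b" for b
    unfolding T_def using T_bounds[OF R0 RP P1, of b] by auto
  have E0pi2: "?E 0 (pi/2) = eta R + eta (1 - R)" unfolding E0 T_def by simp
  define M0 where "M0 = (if R \<le> 1/2 then 1 else ?E 0 (pi/2))"
  have B0: "?E 0 b \<le> M0" for b
  proof (cases "R \<le> 1/2")
    case True
    then show ?thesis unfolding M0_def E0 using h_le1[OF Tb(3) Tb(2)] by simp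
  next
    case False
    have "T (pi/2) = R" unfolding T_def by simp
    then show ?thesis unfolding M0_def E0 using False h_mono[of R "T b"] Tb[of b] by simp
  qed
  have Bq: "?E (pi/4) b \<le> ?E (pi/4) (pi/4)" for b
    unfolding E
  proof (rule EFq_mono)
    show "0 \<le> P + R" using R0 RP by simp
    show "0 \<le> 1 - P + (1 - R)" using P1 RP by simp
    show "0 \<le> K1" "0 \<le> K2" using K1b K2b by auto
    show "K1 / 16 \<le> ((P + R) / 4)^2" using K1b by (simp add: power_divide)
    show "K2 / 16 \<le> ((1 - P + (1 - R)) / 4)^2" using K2b by (simp add: power_divide)
  qed
  define Bs where "Bs = {p \<in> {0..pi/4} \<times> {0..pi/2}. fst p \<in> {0, pi/4} \<or> snd p \<in> {0, pi/4}}"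
  define M where "M = (if cos (2*x + 2*y) \<le> 0
              then max 1 (?E (pi/4) (pi/4))
              else max (?E 0 (pi/2)) (?E (pi/4) (pi/4)))"
  have M: "M = max M0 (?E (pi/4) (pi/4))" unfolding M_def M0_def cR by simp
  have ub: "v \<le> M" if "v \<in> (\<lambda>p. ?E (fst p) (snd p)) ` Bs" for v
  proof -
    from that obtain a b where ab: "(a, b) \<in> Bs" and v: "v = ?E a b" by auto
    from ab have "a = 0 \<or> a = pi/4 \<or> b = 0 \<or> b = pi/4" unfolding Bs_def by auto
    then show ?thesis unfolding M v
    proof (elim disjE)
      assume "a = 0" then show "?E a b \<le> max M0 (?E (pi/4) (pi/4))" using B0[of b] by simp
    next
      assume a: "a = pi/4" show "?E a b \<le> max M0 (?E (pi/4) (pi/4))"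
        unfolding a by (rule max.coboundedI2[OF Bq])
    next
      assume "b = 0" then show "?E a b \<le> max M0 (?E (pi/4) (pi/4))"
        using B0[of a] Ent_sym[of x y z a b] by simp
    next
      assume b: "b = pi/4" show "?E a b \<le> max M0 (?E (pi/4) (pi/4))"
        unfolding b by (subst Ent_sym) (rule max.coboundedI2[OF Bq])
    qed
  qed
  have pq: "(pi/4, pi/4) \<in> Bs" unfolding Bs_def by auto
  have att: "M \<in> (\<lambda>p. ?E (fst p) (snd p)) ` Bs"
  proof (cases "M0 \<le> ?E (pi/4) (pi/4)")
    case True
    then have "M = ?E (pi/4) (pi/4)" unfolding M by simp
    then show ?thesis using pq by (intro image_eqI[of _ _ "(pi/4, pi/4)"]) auto
  next
    case False
    then have MM: "M = M0" unfolding M by simp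
    show ?thesis
    proof (cases "R \<le> 1/2")
      case True
      obtain b0 where b0: "0 \<le> b0" "b0 \<le> pi/2" "T b0 = 1/2"
        using T_half[OF True Pge] unfolding T_def by auto
      have "?E 0 b0 = 1" unfolding E0 b0 by (simp add: eta_half)
      moreover have "(0, b0) \<in> Bs" unfolding Bs_def using b0 by auto
      ultimately show ?thesis unfolding MM M0_def using True by (intro image_eqI[of _ _ "(0, b0)"]) auto
    next
      case False
      have "(0, pi/2) \<in> Bs" unfolding Bs_def by auto
      then show ?thesis unfolding MM M0_def using False by (intro image_eqI[of _ _ "(0, pi/2)"]) auto
    qed
  qed
  have part2: "Sup ((\<lambda>p. ?E (fst p) (snd p)) ` Bs) = M"
    by (rule cSup_eq_maximum[OF att ub])
  show ?thesis
    using part2 img_half1[of x y z] img_half2[of x y z]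
    unfolding Bs_def M_def by simp
qed


end
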